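(* Let $I_1,\dots,I_n$ be i.i.d. Bernoulli random variables with $\Pr[I_i=1]=p=1-q$, $0<q<1$, let $I_{n+1}=\prod_{j=1}^n(1-I_j)$, and let $P_i=I_i/\sum_{j=1}^{n+1}I_j$ for $i=1,\dots,n+1$. Let $\pi_1,\dots,\pi_n\ge0$ with $\pi_i>0$ for some $i$, and let $W_i=\big(\sum_{j=1}^{n}\pi_j\big)P_i+\pi_iP_{n+1}$ for $i=1,\dots,n$ (homogeneous tontine with passive administrator). Then $E[W_i]=\pi_i$ for all $i=1,\dots,n$ if and only if $\pi_1=\pi_2=\dots=\pi_n$. *)

theory Defs
  imports "HOL-Probability.Probability"
begin

text \<open>Outcomes: I :: nat \<Rightarrow> bool, where I j for j < n is the indicator I_(j+1)
  (0-based indexing). Index n plays the role of the paper's index n+1.\<close>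

definition tontine_Ilast :: "nat \<Rightarrow> (nat \<Rightarrow> bool) \<Rightarrow> real" where
  "tontine_Ilast n I = (\<Prod>j<n. 1 - of_bool (I j))"

definition tontine_P :: "nat \<Rightarrow> (nat \<Rightarrow> bool) \<Rightarrow> nat \<Rightarrow> real" where
  "tontine_P n I i =
     (if i = n then tontine_Ilast n I else of_bool (I i)) /
     ((\<Sum>j<n. of_bool (I j)) + tontine_Ilast n I)"

definition tontine_W :: "nat \<Rightarrow> (nat \<Rightarrow> real) \<Rightarrow> (nat \<Rightarrow> bool) \<Rightarrow> nat \<Rightarrow> real" where
  "tontine_W n \<pi> I i = (\<Sum>j<n. \<pi> j) * tontine_P n I i + \<pi> i * tontine_P n I n"

end

theory Submission
  imports Defs
begin

abbreviation TM :: "nat \<Rightarrow> real \<Rightarrow> (nat \<Rightarrow> bool) pmf" where "TM n q \<equiv> Pi_pmf {..<n} False (\<lambda>_. bernoulli_pmf (1 - q))"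

lemma fin_TM: "finite (set_pmf (TM n q))"
proof -
  have "set_pmf (TM n q) = PiE_dflt {..<n} False (set_pmf \<circ> (\<lambda>_. bernoulli_pmf (1 - q)))"
    by (rule set_Pi_pmf) simp
  moreover have "finite (PiE_dflt {..<n} False (set_pmf \<circ> (\<lambda>_. bernoulli_pmf (1 - (q::real)))))"
    by (rule finite_PiE_dflt) auto
  ultimately show ?thesis by simp
qed

lemma int_TM: "integrable (measure_pmf (TM n q)) (f :: _ \<Rightarrow> real)"
  by (rule integrable_measure_pmf_finite[OF fin_TM])

lemma Ilast_01: "tontine_Ilast n I = (if \<exists>j<n. I j then 0 else 1)"
  unfolding tontine_Ilast_def by auto

lemma denom_pos: "(\<Sum>j<n. of_bool (I j)) + tontine_Ilast n I > (0::real)"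
proof (cases "\<exists>j<n. I j")
  case True
  then obtain j where j: "j < n" "I j" by auto
  have "(1::real) \<le> (\<Sum>j<n. of_bool (I j))"
    using member_le_sum[of j "{..<n}" "\<lambda>j. of_bool (I j) :: real"] j by simp
  then show ?thesis by (simp add: Ilast_01)
next
  case False
  then show ?thesis by (simp add: Ilast_01 sum_nonneg add_nonneg_pos)
qed

lemma P_last: "tontine_P n I n = tontine_Ilast n I"
proof (cases "\<exists>j<n. I j")
  case True
  then show ?thesis by (simp add: tontine_P_def Ilast_01)
next
  case False
  then have "(\<Sum>j<n. of_bool (I j) :: real) = 0" by auto
  then show ?thesis using False by (simp add: tontine_P_def Ilast_01)
qed

lemma P_sum: "(\<Sum>i<n. tontine_P n I i) + tontine_P n I n = 1"
proof -
  let ?N = "(\<Sum>j<n. of_bool (I j)) + tontine_Ilast n I :: real"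
  have "(\<Sum>i<n. tontine_P n I i) = (\<Sum>i<n. of_bool (I i) / ?N)"
    by (rule sum.cong) (auto simp: tontine_P_def)
  also have "\<dots> = (\<Sum>i<n. of_bool (I i)) / ?N" by (rule sum_divide_distrib[symmetric])
  finally have a: "(\<Sum>i<n. tontine_P n I i) = (\<Sum>i<n. of_bool (I i)) / ?N" .
  have b: "tontine_P n I n = tontine_Ilast n I / ?N" by (simp add: tontine_P_def)
  have "(\<Sum>i<n. tontine_P n I i) + tontine_P n I n = ?N / ?N"
    unfolding a b add_divide_distrib[symmetric] ..
  then show ?thesis using denom_pos[where n=n and I=I] by simp
qed

definition swp :: "nat \<Rightarrow> nat \<Rightarrow> nat \<Rightarrow> nat" where
  "swp i j k = (if k = i then j else if k = j then i else k)"

lemma swp_bij: "i < n \<Longrightarrow> j < n \<Longrightarrow> bij_betw (swp i j) {..<n} {..<n}"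
  by (rule bij_betw_byWitness[where f' = "swp i j"]) (auto simp: swp_def)

lemma P_swap:
  assumes "i < n" "j < n"
  shows "tontine_P n (I \<circ> swp i j) i = tontine_P n I j"
proof -
  have s: "(\<Sum>k<n. of_bool ((I \<circ> swp i j) k) :: real) = (\<Sum>k<n. of_bool (I k))"
    using sum.reindex_bij_betw[OF swp_bij[OF assms], of "\<lambda>k. of_bool (I k) :: real"] by simp
  have p: "tontine_Ilast n (I \<circ> swp i j) = tontine_Ilast n I"
    unfolding tontine_Ilast_def
    using prod.reindex_bij_betw[OF swp_bij[OF assms], of "\<lambda>k. 1 - of_bool (I k) :: real"] by simp
  show ?thesis using assms unfolding tontine_P_def s p by (simp add: swp_def)
qed

lemma E_sym:
  assumes "i < n" "j < n"
  shows "measure_pmf.expectation (TM n q) (\<lambda>I. tontine_P n I i)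
       = measure_pmf.expectation (TM n q) (\<lambda>I. tontine_P n I j)"
proof -
  have eq: "TM n q = map_pmf (\<lambda>g. g \<circ> swp i j) (TM n q)"
    by (rule Pi_pmf_bij_betw) (use assms in \<open>auto simp: swp_bij swp_def\<close>)
  have "measure_pmf.expectation (TM n q) (\<lambda>I. tontine_P n I i)
     = measure_pmf.expectation (map_pmf (\<lambda>g. g \<circ> swp i j) (TM n q)) (\<lambda>I. tontine_P n I i)"
    by (rule arg_cong[where f="\<lambda>M. measure_pmf.expectation M (\<lambda>I. tontine_P n I i)"], rule eq)
  also have "\<dots> = measure_pmf.expectation (TM n q) (\<lambda>I. tontine_P n (I \<circ> swp i j) i)"
    by (rule integral_map_pmf)
  also have "\<dots> = measure_pmf.expectation (TM n q) (\<lambda>I. tontine_P n I j)"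
    using P_swap[OF assms] by simp
  finally show ?thesis .
qed

lemma E_last:
  assumes "0 < q" "q < 1"
  shows "measure_pmf.expectation (TM n q) (\<lambda>I. tontine_P n I n) = q ^ n"
proof -
  have "measure_pmf.expectation (TM n q) (\<lambda>I. tontine_P n I n)
      = measure_pmf.expectation (TM n q) (\<lambda>I. \<Prod>x\<in>{..<n}. (\<lambda>_ b. 1 - of_bool b) x (I x))"
    by (simp add: P_last tontine_Ilast_def)
  also have "\<dots> = (\<Prod>x\<in>{..<n}. measure_pmf.expectation (bernoulli_pmf (1 - q)) (\<lambda>b. 1 - of_bool b))"
    by (rule expectation_prod_Pi_pmf) (auto intro: integrable_measure_pmf_finite)
  also have "\<dots> = q ^ n" using assms by simp
  finally show ?thesis .
qed

theorem mainTheorem13: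
  fixes n :: nat and q :: real and \<pi> :: "nat \<Rightarrow> real"
  assumes "0 < q" and "q < 1"
    and "\<forall>i<n. 0 \<le> \<pi> i" and "\<exists>i<n. 0 < \<pi> i"
  shows "(\<forall>i<n. measure_pmf.expectation (Pi_pmf {..<n} False (\<lambda>_. bernoulli_pmf (1 - q)))
              (\<lambda>I. tontine_W n \<pi> I i) = \<pi> i)
         \<longleftrightarrow> (\<forall>i<n. \<forall>j<n. \<pi> i = \<pi> j)"
proof -
  define c where "c = measure_pmf.expectation (TM n q) (\<lambda>I. tontine_P n I 0)"
  define S where "S = (\<Sum>j<n. \<pi> j)"
  have n0: "0 < n" using assms(4) by auto
  have ci: "measure_pmf.expectation (TM n q) (\<lambda>I. tontine_P n I i) = c" if "i < n" for i
    unfolding c_def using E_sym[OF that n0] .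
  have "1 = measure_pmf.expectation (TM n q) (\<lambda>I. (\<Sum>i<n. tontine_P n I i) + tontine_P n I n)"
    by (simp add: P_sum)
  also have "\<dots> = (\<Sum>i<n. measure_pmf.expectation (TM n q) (\<lambda>I. tontine_P n I i)) + q ^ n"
    by (simp add: int_TM Bochner_Integration.integral_add Bochner_Integration.integral_sum E_last assms(1,2))
  also have "\<dots> = n * c + q ^ n" using ci by simp
  finally have nc: "n * c = 1 - q ^ n" by simp
  have qn: "q ^ n < 1" using assms(1,2) n0 by (simp add: power_less_one_iff)
  have EW: "measure_pmf.expectation (TM n q) (\<lambda>I. tontine_W n \<pi> I i) = S * c + \<pi> i * q ^ n"
    if "i < n" for i
    unfolding tontine_W_def
    by (simp add: int_TM Bochner_Integration.integral_add E_last assms(1,2) ci[OF that] S_def)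
  have c0: "c \<noteq> 0" using nc qn by auto
  have key: "(S * c + \<pi> i * q ^ n = \<pi> i) \<longleftrightarrow> \<pi> i = S / n" for i
  proof -
    have "(S * c + \<pi> i * q ^ n = \<pi> i) \<longleftrightarrow> S * c = \<pi> i * (1 - q ^ n)"
      by (auto simp: algebra_simps)
    also have "\<dots> \<longleftrightarrow> S * c = \<pi> i * (n * c)" by (simp add: nc)
    also have "\<dots> \<longleftrightarrow> S * c = (\<pi> i * n) * c" by (simp add: mult.assoc)
    also have "\<dots> \<longleftrightarrow> S = \<pi> i * n" using c0 by simp
    also have "\<dots> \<longleftrightarrow> \<pi> i = S / n" using n0 by (auto simp: field_simps)
    finally show ?thesis .
  qed
  show ?thesis
  proof
    assume "\<forall>i<n. measure_pmf.expectation (TM n q) (\<lambda>I. tontine_W n \<pi> I i) = \<pi> i"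
    then have h: "\<forall>i<n. \<pi> i = S / n" using EW key by auto
    show "\<forall>i<n. \<forall>j<n. \<pi> i = \<pi> j"
    proof (intro allI impI)
      fix i j assume "i < n" "j < n"
      then show "\<pi> i = \<pi> j" using h by metis
    qed
  next
    assume eq: "\<forall>i<n. \<forall>j<n. \<pi> i = \<pi> j"
    have e0: "\<And>i. i < n \<Longrightarrow> \<pi> i = \<pi> 0" using eq n0 by blast
    have "S = (\<Sum>j<n. \<pi> 0)" unfolding S_def by (rule sum.cong[OF refl], rule e0, simp)
    then have S0: "S = n * \<pi> 0" by simp
    have h: "\<forall>i<n. \<pi> i = S / n"
    proof (intro allI impI)
      fix i assume "i < n"
      then have "\<pi> i = \<pi> 0" by (rule e0)
      then show "\<pi> i = S / n" unfolding S0 using n0 by simp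
    qed
    show "\<forall>i<n. measure_pmf.expectation (TM n q) (\<lambda>I. tontine_W n \<pi> I i) = \<pi> i"
    proof (intro allI impI)
      fix i assume i: "i < n"
      have "\<pi> i = S / n" using h i by blast
      then have "S * c + \<pi> i * q ^ n = \<pi> i" using key[of i] by blast
      then show "measure_pmf.expectation (TM n q) (\<lambda>I. tontine_W n \<pi> I i) = \<pi> i"
        using EW[OF i] by simp
    qed
  qed
qed

end
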